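(* The complex $$\cdots\xrightarrow{Q}\mathcal{D}\otimes H^\ast_{-5}\xrightarrow{Q}\mathcal{D}\otimes H^\ast_{-3}\xrightarrow{Q}\mathcal{D}\otimes H^\ast_{-1}\to0$$ is exact at $\mathcal{D}\otimes H^\ast_{-2n-1}$ for every $n\ge1$; that is, the kernel of $Q:\mathcal{D}\otimes H^\ast_{-2n-1}\to\mathcal{D}\otimes H^\ast_{-2n+1}$ equals $Q(\mathcal{D}\otimes H^\ast_{-2n-3})$.
   Context: $\mathcal{D}=\mathbb{C}[\partial_1,\partial_3,\partial_5,\ldots]$ is a polynomial ring in commuting variables $\partial_{2n-1}$, $n\ge1$. Fermions $\psi_n,\psi^\ast_n$ ($n\in2\mathbb{Z}+1$) satisfy $[\psi_m,\psi_n]_+=[\psi^\ast_m,\psi^\ast_n]_+=0$, $[\psi^\ast_m,\psi_n]_+=\delta_{mn}$. For odd $m$ the bra vacuum $\langle m|$ satisfies $\langle m|\psi_n=0$ ($n\le m$), $\langle m|\psi^\ast_n=0$ ($n>m$), $\langle m-2|\psi_m=\langle m|$; $H^\ast_m$ is the Fock space of bra vectors obtained from $\langle m|$ by right multiplication with products having equal numbers of $\psi$'s and $\psi^\ast$'s. $Q:\mathcal{D}\otimes H^\ast_m\to\mathcal{D}\otimes H^\ast_{m+2}$ is $Q(P\otimes v)=\sum_{n\ge1}\partial_{2n-1}P\otimes v\,\psi_{-(2n-1)}$; $Q^2=0$. *)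

theory Defs
  imports Complex_Main "HOL-Library.Poly_Mapping"
begin

text \<open>Model of bra Fock space: a basis bra vector is a set S of odd integers
(the "occupied" modes).
Right multiplication by psi_k inserts k (zero if k already in S) with sign
(-1)^(number of elements of S greater than k); psi*_k removes k.
This satisfies the CAR and the vacuum conditions of the paper.\<close>

definition vac_set :: "int \<Rightarrow> int set" where
  "vac_set m = {n. odd n \<and> n \<le> m}"

definition fock_state :: "int \<Rightarrow> int set \<Rightarrow> bool" where
  "fock_state m S \<longleftrightarrow> (\<forall>s\<in>S. odd s) \<and> finite (S - vac_set m) \<and> finite (vac_set m - S)
     \<and> card (S - vac_set m) = card (vac_set m - S)"

text \<open>Monomials in the variables d_(2i+1), i = 0,1,2,...: exponent vectors (finitely supported nat-valued maps).
An element of D \<otimes> H*_m is a finitely supported complex combination of pairs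
(monomial, basis bra vector of charge m).\<close>

type_synonym elt = "((nat \<Rightarrow>\<^sub>0 nat) \<times> int set) \<Rightarrow>\<^sub>0 complex"

definition DH :: "int \<Rightarrow> elt set" where
  "DH m = {f. \<forall>x\<in>Poly_Mapping.keys f. fock_state m (snd x)}"

definition psi_sign :: "int set \<Rightarrow> int \<Rightarrow> complex" where
  "psi_sign S k = (-1) ^ card {s\<in>S. s > k}"

text \<open>Q(P \<otimes> v) = \<Sum>_{i\<ge>0} d_{2i+1} P \<otimes> v psi_{-(2i+1)}.\<close>
definition Q :: "elt \<Rightarrow> elt" where
  "Q f = (\<Sum>x\<in>Poly_Mapping.keys f. \<Sum>i\<in>{i::nat. - (2 * int i + 1) \<notin> snd x}.
      Poly_Mapping.single (fst x + Poly_Mapping.single i 1, insert (- (2 * int i + 1)) (snd x))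
        (psi_sign (snd x) (- (2 * int i + 1)) * Poly_Mapping.lookup f x))"

end

theory Submission
  imports Defs
begin
declare One_nat_def [simp del]
definition kk :: "nat \<Rightarrow> int" where "kk i = - (2 * int i + 1)"

lemma kk_eq_iff [simp]: "kk i = kk j \<longleftrightarrow> i = j" by (simp add: kk_def)
lemma kk_less_iff [simp]: "kk i < kk j \<longleftrightarrow> j < i" by (simp add: kk_def)
lemma kk_neg: "kk i < 0" by (simp add: kk_def)
lemma kk_odd: "odd (kk i)" by (simp add: kk_def)
abbreviation ee :: "nat \<Rightarrow> (nat \<Rightarrow>\<^sub>0 nat)" where "ee i \<equiv> Poly_Mapping.single i 1"

lemma lookup_dsum:
  assumes "finite F" "\<forall>x\<in>F. finite (I x)"
  shows "Poly_Mapping.lookup (\<Sum>x\<in>F. \<Sum>i\<in>I x. Poly_Mapping.single (\<phi> x i) (c x i)) y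
     = (\<Sum>p\<in>{p\<in>Sigma F I. \<phi> (fst p) (snd p) = y}. c (fst p) (snd p))"
proof -
  have "Poly_Mapping.lookup (\<Sum>x\<in>F. \<Sum>i\<in>I x. Poly_Mapping.single (\<phi> x i) (c x i)) y
     = (\<Sum>x\<in>F. \<Sum>i\<in>I x. (if \<phi> x i = y then c x i else 0))"
    by (simp add: lookup_sum lookup_single when_def eq_commute)
  also have "\<dots> = (\<Sum>p\<in>Sigma F I. (if \<phi> (fst p) (snd p) = y then c (fst p) (snd p) else 0))"
    using assms by (subst sum.Sigma) (auto simp: split_def)
  also have "\<dots> = (\<Sum>p\<in>{p\<in>Sigma F I. \<phi> (fst p) (snd p) = y}. c (fst p) (snd p))"
    using assms by (subst sum.inter_filter) (auto intro: finite_SigmaI)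
  finally show ?thesis .
qed

lemma inj_kk: "inj kk" by (rule injI) simp


lemma Q_def': "Q f = (\<Sum>x\<in>Poly_Mapping.keys f. \<Sum>i\<in>{i. kk i \<notin> snd x}.
      Poly_Mapping.single (fst x + ee i, insert (kk i) (snd x))
        (psi_sign (snd x) (kk i) * Poly_Mapping.lookup f x))"
  by (simp add: Q_def kk_def)

definition good :: "int set \<Rightarrow> bool" where
  "good T \<longleftrightarrow> finite {s\<in>T. s \<ge> 0} \<and> finite {i. kk i \<notin> T}"

lemma good_upper: "good T \<Longrightarrow> finite {s\<in>T. s > j}"
  unfolding good_def
  by (rule finite_subset[of _ "{s\<in>T. s \<ge> 0} \<union> {j<..<0}"]) auto

lemma good_insert: "good T \<Longrightarrow> good (insert k T)"
  unfolding good_def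
  by (auto intro: finite_subset[of _ "insert k {s\<in>T. s \<ge> 0}"] finite_subset[of _ "{i. kk i \<notin> T}"])

lemma good_remove: "good T \<Longrightarrow> good (T - {k})"
proof -
  assume g: "good T"
  have f: "finite (kk -` {k})" by (rule finite_vimageI[OF _ inj_kk]) simp
  have "{i. kk i \<notin> T - {k}} \<subseteq> {i. kk i \<notin> T} \<union> kk -` {k}" by auto
  with g f show ?thesis unfolding good_def
    by (auto intro: finite_subset[of _ "{s\<in>T. s \<ge> 0}"] finite_subset)
qed

lemma sig_ins_self: "psi_sign (insert k T) k = psi_sign T k"
proof -
  have "{s\<in>insert k T. s>k} = {s\<in>T. s>k}" by auto
  then show ?thesis by (simp add: psi_sign_def)
qed

lemma sig_rem_self: "psi_sign (T - {k}) k = psi_sign T k"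
proof -
  have "{s\<in>T - {k}. s>k} = {s\<in>T. s>k}" by auto
  then show ?thesis by (simp add: psi_sign_def)
qed

lemma sig_ins:
  assumes "k \<notin> T" "finite {s\<in>T. s>j}" "k \<noteq> j"
  shows "psi_sign (insert k T) j = (if k > j then - psi_sign T j else psi_sign T j)"
proof (cases "k > j")
  case True
  then have "{s\<in>insert k T. s>j} = insert k {s\<in>T. s>j}" by auto
  moreover have "k \<notin> {s\<in>T. s>j}" using assms by auto
  ultimately show ?thesis using True assms by (simp add: psi_sign_def)
next
  case False
  then have "{s\<in>insert k T. s>j} = {s\<in>T. s>j}" using assms by auto
  then show ?thesis using False by (simp add: psi_sign_def)
qed

lemma sig_rem:
  assumes "k \<in> T" "finite {s\<in>T. s>j}" "k \<noteq> j"
  shows "psi_sign (T - {k}) j = (if k > j then - psi_sign T j else psi_sign T j)"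
proof -
  have f: "finite {s\<in>T - {k}. s>j}" by (rule finite_subset[OF _ assms(2)]) auto
  have "psi_sign T j = psi_sign (insert k (T - {k})) j" using assms(1) by (simp add: insert_absorb)
  also have "\<dots> = (if k > j then - psi_sign (T - {k}) j else psi_sign (T - {k}) j)"
    by (rule sig_ins[OF _ f assms(3)]) simp
  finally show ?thesis by auto
qed

lemma sig_sq: "psi_sign T k * psi_sign T k = 1"
  by (simp add: psi_sign_def flip: power_mult_distrib)

lemma lookup_mine: "Poly_Mapping.lookup (b - ee i) j = Poly_Mapping.lookup b j - (if i = j then 1 else 0)"
  by (simp add: lookup_minus lookup_single when_def)

lemma lookup_plus_e: "Poly_Mapping.lookup (b + ee i) j = Poly_Mapping.lookup b j + (if i = j then 1 else 0)"
  by (simp add: lookup_add lookup_single when_def)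

lemma pm_diff_add: "i \<in> Poly_Mapping.keys b \<Longrightarrow> b - ee i + ee i = b"
  by (rule poly_mapping_eqI) (auto simp: lookup_add lookup_minus lookup_single when_def in_keys_iff)

lemma pm_add_diff: "b + ee i - ee i = b"
  by (rule poly_mapping_eqI) (auto simp: lookup_add lookup_minus lookup_single when_def in_keys_iff)

lemma pm_swap: "i \<in> Poly_Mapping.keys b \<Longrightarrow> i \<noteq> j \<Longrightarrow> b - ee i + ee j = b + ee j - ee i"
  by (rule poly_mapping_eqI) (auto simp: lookup_add lookup_minus lookup_single when_def in_keys_iff)

lemma pm_comm2: "b - ee i - ee j = b - ee j - ee i"
  by (rule poly_mapping_eqI) (auto simp: lookup_minus)

lemma keys_mine: "j \<noteq> i \<Longrightarrow> j \<in> Poly_Mapping.keys (b - ee i) \<longleftrightarrow> j \<in> Poly_Mapping.keys b"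
  by (auto simp: lookup_add lookup_minus lookup_single when_def in_keys_iff)

lemma keys_plus_e: "j \<in> Poly_Mapping.keys (b + ee i) \<longleftrightarrow> j \<in> Poly_Mapping.keys b \<or> j = i"
  by (auto simp: lookup_add lookup_minus lookup_single when_def in_keys_iff)


lemma Q_lookup:
  assumes gd: "\<forall>x\<in>Poly_Mapping.keys f. good (snd x)"
  shows "Poly_Mapping.lookup (Q f) (b,T) = (\<Sum>i\<in>{i\<in>Poly_Mapping.keys b. kk i \<in> T}.
            psi_sign T (kk i) * Poly_Mapping.lookup f (b - ee i, T - {kk i}))"
proof -
  define I where "I = (\<lambda>x::(nat \<Rightarrow>\<^sub>0 nat) \<times> int set. {i. kk i \<notin> snd x})"
  have fin: "\<forall>x\<in>Poly_Mapping.keys f. finite (I x)" using gd by (auto simp: I_def good_def)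
  have "Poly_Mapping.lookup (Q f) (b,T) = (\<Sum>p\<in>{p\<in>Sigma (Poly_Mapping.keys f) I.
      (fst (fst p) + ee (snd p), insert (kk (snd p)) (snd (fst p))) = (b,T)}.
      psi_sign (snd (fst p)) (kk (snd p)) * Poly_Mapping.lookup f (fst p))"
    unfolding Q_def' I_def
    by (rule lookup_dsum[where \<phi>="\<lambda>x i. (fst x + ee i, insert (kk i) (snd x))"
          and c="\<lambda>x i. psi_sign (snd x) (kk i) * Poly_Mapping.lookup f x"])
       (use fin in \<open>auto simp: I_def\<close>)
  also have "{p\<in>Sigma (Poly_Mapping.keys f) I.
      (fst (fst p) + ee (snd p), insert (kk (snd p)) (snd (fst p))) = (b,T)}
     = (\<lambda>i. ((b - ee i, T - {kk i}), i)) ` {i\<in>Poly_Mapping.keys b. kk i \<in> T \<and> (b - ee i, T - {kk i}) \<in> Poly_Mapping.keys f}"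
  proof (rule set_eqI, rule iffI)
    fix p assume "p \<in> {p\<in>Sigma (Poly_Mapping.keys f) I.
      (fst (fst p) + ee (snd p), insert (kk (snd p)) (snd (fst p))) = (b,T)}"
    then obtain a S i where p: "p = ((a,S),i)" and k: "(a,S) \<in> Poly_Mapping.keys f" and ni: "kk i \<notin> S"
      and e1: "a + ee i = b" and e2: "insert (kk i) S = T"
      by (cases p) (auto simp: I_def)
    have ib: "i \<in> Poly_Mapping.keys b" using e1 by (auto simp: in_keys_iff lookup_add lookup_single)
    have a: "b - ee i = a" using e1 pm_add_diff by metis
    have s: "T - {kk i} = S" using e2 ni by auto
    show "p \<in> (\<lambda>i. ((b - ee i, T - {kk i}), i)) ` {i\<in>Poly_Mapping.keys b. kk i \<in> T \<and> (b - ee i, T - {kk i}) \<in> Poly_Mapping.keys f}"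
      using ib a s k p e2 by auto
  next
    fix p assume "p \<in> (\<lambda>i. ((b - ee i, T - {kk i}), i)) ` {i\<in>Poly_Mapping.keys b. kk i \<in> T \<and> (b - ee i, T - {kk i}) \<in> Poly_Mapping.keys f}"
    then obtain i where p: "p = ((b - ee i, T - {kk i}), i)" and ib: "i \<in> Poly_Mapping.keys b"
      and kT: "kk i \<in> T" and k: "(b - ee i, T - {kk i}) \<in> Poly_Mapping.keys f" by auto
    have "b - ee i + ee i = b" using ib by (rule pm_diff_add)
    moreover have "insert (kk i) (T - {kk i}) = T" using kT by auto
    ultimately show "p \<in> {p\<in>Sigma (Poly_Mapping.keys f) I.
      (fst (fst p) + ee (snd p), insert (kk (snd p)) (snd (fst p))) = (b,T)}"
      using p k by (auto simp: I_def)
  qed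
  also have "(\<Sum>p\<in>(\<lambda>i. ((b - ee i, T - {kk i}), i)) ` {i\<in>Poly_Mapping.keys b. kk i \<in> T \<and> (b - ee i, T - {kk i}) \<in> Poly_Mapping.keys f}.
      psi_sign (snd (fst p)) (kk (snd p)) * Poly_Mapping.lookup f (fst p))
    = (\<Sum>i\<in>{i\<in>Poly_Mapping.keys b. kk i \<in> T \<and> (b - ee i, T - {kk i}) \<in> Poly_Mapping.keys f}.
      psi_sign T (kk i) * Poly_Mapping.lookup f (b - ee i, T - {kk i}))"
    by (subst sum.reindex) (auto simp: inj_on_def sig_rem_self)
  also have "\<dots> = (\<Sum>i\<in>{i\<in>Poly_Mapping.keys b. kk i \<in> T}.
            psi_sign T (kk i) * Poly_Mapping.lookup f (b - ee i, T - {kk i}))"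
    by (rule sum.mono_neutral_left) (auto simp: in_keys_iff)
  finally show ?thesis .
qed


definition Hop :: "elt \<Rightarrow> elt" where
  "Hop f = (\<Sum>x\<in>Poly_Mapping.keys f. \<Sum>i\<in>{i\<in>Poly_Mapping.keys (fst x). kk i \<in> snd x}.
      Poly_Mapping.single (fst x - ee i, snd x - {kk i})
        (of_nat (Poly_Mapping.lookup (fst x) i) * psi_sign (snd x) (kk i) * Poly_Mapping.lookup f x))"

lemma H_lookup:
  assumes gT: "good T"
  shows "Poly_Mapping.lookup (Hop f) (b,T) = (\<Sum>j\<in>{j. kk j \<notin> T}.
     of_nat (Poly_Mapping.lookup b j + 1) * psi_sign T (kk j) * Poly_Mapping.lookup f (b + ee j, insert (kk j) T))"
proof -
  define I where "I = (\<lambda>x::(nat \<Rightarrow>\<^sub>0 nat) \<times> int set. {i\<in>Poly_Mapping.keys (fst x). kk i \<in> snd x})"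
  have fin: "\<forall>x\<in>Poly_Mapping.keys f. finite (I x)" by (auto simp: I_def)
  have "Poly_Mapping.lookup (Hop f) (b,T) = (\<Sum>p\<in>{p\<in>Sigma (Poly_Mapping.keys f) I.
      (fst (fst p) - ee (snd p), snd (fst p) - {kk (snd p)}) = (b,T)}.
      of_nat (Poly_Mapping.lookup (fst (fst p)) (snd p)) * psi_sign (snd (fst p)) (kk (snd p)) * Poly_Mapping.lookup f (fst p))"
    unfolding Hop_def I_def
    by (rule lookup_dsum[where \<phi>="\<lambda>x i. (fst x - ee i, snd x - {kk i})"
          and c="\<lambda>x i. of_nat (Poly_Mapping.lookup (fst x) i) * psi_sign (snd x) (kk i) * Poly_Mapping.lookup f x"])
       (use fin in \<open>auto simp: I_def\<close>)
  also have "{p\<in>Sigma (Poly_Mapping.keys f) I.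
      (fst (fst p) - ee (snd p), snd (fst p) - {kk (snd p)}) = (b,T)}
     = (\<lambda>j. ((b + ee j, insert (kk j) T), j)) ` {j. kk j \<notin> T \<and> (b + ee j, insert (kk j) T) \<in> Poly_Mapping.keys f}"
  proof (rule set_eqI, rule iffI)
    fix p assume "p \<in> {p\<in>Sigma (Poly_Mapping.keys f) I.
      (fst (fst p) - ee (snd p), snd (fst p) - {kk (snd p)}) = (b,T)}"
    then obtain a S i where p: "p = ((a,S),i)" and k: "(a,S) \<in> Poly_Mapping.keys f" and ia: "i \<in> Poly_Mapping.keys a"
      and ki: "kk i \<in> S" and e1: "a - ee i = b" and e2: "S - {kk i} = T"
      by (cases p) (auto simp: I_def)
    have a: "a = b + ee i" using pm_diff_add[OF ia] e1 by metis
    have s: "S = insert (kk i) T" "kk i \<notin> T" using e2 ki by auto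
    show "p \<in> (\<lambda>j. ((b + ee j, insert (kk j) T), j)) ` {j. kk j \<notin> T \<and> (b + ee j, insert (kk j) T) \<in> Poly_Mapping.keys f}"
      unfolding p a s(1) using k[unfolded a s(1)] s(2) by (intro image_eqI[where x=i]) auto
  next
    fix p assume "p \<in> (\<lambda>j. ((b + ee j, insert (kk j) T), j)) ` {j. kk j \<notin> T \<and> (b + ee j, insert (kk j) T) \<in> Poly_Mapping.keys f}"
    then obtain j where p: "p = ((b + ee j, insert (kk j) T), j)" and kT: "kk j \<notin> T"
      and k: "(b + ee j, insert (kk j) T) \<in> Poly_Mapping.keys f" by auto
    have "j \<in> Poly_Mapping.keys (b + ee j)" by (subst keys_plus_e) simp
    moreover have "insert (kk j) T - {kk j} = T" using kT by auto
    ultimately show "p \<in> {p\<in>Sigma (Poly_Mapping.keys f) I.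
      (fst (fst p) - ee (snd p), snd (fst p) - {kk (snd p)}) = (b,T)}"
      unfolding p using k \<open>j \<in> Poly_Mapping.keys (b + ee j)\<close> \<open>insert (kk j) T - {kk j} = T\<close>
      by (simp add: I_def pm_add_diff)
  qed
  also have "(\<Sum>p\<in>(\<lambda>j. ((b + ee j, insert (kk j) T), j)) ` {j. kk j \<notin> T \<and> (b + ee j, insert (kk j) T) \<in> Poly_Mapping.keys f}.
      of_nat (Poly_Mapping.lookup (fst (fst p)) (snd p)) * psi_sign (snd (fst p)) (kk (snd p)) * Poly_Mapping.lookup f (fst p))
    = (\<Sum>j\<in>{j. kk j \<notin> T \<and> (b + ee j, insert (kk j) T) \<in> Poly_Mapping.keys f}.
     of_nat (Poly_Mapping.lookup b j + 1) * psi_sign T (kk j) * Poly_Mapping.lookup f (b + ee j, insert (kk j) T))"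
  proof -
    have inj: "inj_on (\<lambda>j. ((b + ee j, insert (kk j) T), j)) {j. kk j \<notin> T \<and> (b + ee j, insert (kk j) T) \<in> Poly_Mapping.keys f}"
      by (auto simp: inj_on_def)
    have l: "Poly_Mapping.lookup (b + ee j) j = Poly_Mapping.lookup b j + 1" for j
      by (simp add: lookup_add)
    show ?thesis
      by (subst sum.reindex[OF inj]) (simp add: l sig_ins_self)
  qed
  also have "\<dots> = (\<Sum>j\<in>{j. kk j \<notin> T}.
     of_nat (Poly_Mapping.lookup b j + 1) * psi_sign T (kk j) * Poly_Mapping.lookup f (b + ee j, insert (kk j) T))"
    using gT by (intro sum.mono_neutral_left) (auto simp: in_keys_iff good_def)
  finally show ?thesis .
qed

lemma keys_single_sub: "y \<in> Poly_Mapping.keys (Poly_Mapping.single k v) \<Longrightarrow> y = k"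
  by (simp split: if_splits)

lemma keys_dsum:
  assumes "y \<in> Poly_Mapping.keys (\<Sum>x\<in>F. \<Sum>i\<in>I x. Poly_Mapping.single (\<phi> x i) (c x i))"
  shows "\<exists>x\<in>F. \<exists>i\<in>I x. y = \<phi> x i"
proof -
  have "y \<in> (\<Union>x\<in>F. Poly_Mapping.keys (\<Sum>i\<in>I x. Poly_Mapping.single (\<phi> x i) (c x i)))"
    using assms keys_sum[of "\<lambda>x. \<Sum>i\<in>I x. Poly_Mapping.single (\<phi> x i) (c x i)" F] by (rule subsetD[rotated])
  then obtain x where x: "x \<in> F" and y: "y \<in> Poly_Mapping.keys (\<Sum>i\<in>I x. Poly_Mapping.single (\<phi> x i) (c x i))"
    by (rule UN_E)
  have "y \<in> (\<Union>i\<in>I x. Poly_Mapping.keys (Poly_Mapping.single (\<phi> x i) (c x i)))"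
    using y keys_sum[of "\<lambda>i. Poly_Mapping.single (\<phi> x i) (c x i)" "I x"] by (rule subsetD[rotated])
  then obtain i where i: "i \<in> I x" and yy: "y \<in> Poly_Mapping.keys (Poly_Mapping.single (\<phi> x i) (c x i))"
    by (rule UN_E)
  from yy have "y = \<phi> x i" by (rule keys_single_sub)
  with x i show ?thesis by blast
qed

lemma keys_Q:
  assumes "y \<in> Poly_Mapping.keys (Q f)"
  shows "\<exists>x\<in>Poly_Mapping.keys f. \<exists>i. kk i \<notin> snd x \<and> y = (fst x + ee i, insert (kk i) (snd x))"
proof -
  from keys_dsum[OF assms[unfolded Q_def']] obtain x i where "x \<in> Poly_Mapping.keys f" "kk i \<notin> snd x"
    "y = (fst x + ee i, insert (kk i) (snd x))" by blast
  then show ?thesis by blast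
qed

lemma keys_Hop:
  assumes "y \<in> Poly_Mapping.keys (Hop f)"
  shows "\<exists>x\<in>Poly_Mapping.keys f. \<exists>i. kk i \<in> snd x \<and> y = (fst x - ee i, snd x - {kk i})"
proof -
  from keys_dsum[OF assms[unfolded Hop_def]] obtain x i where "x \<in> Poly_Mapping.keys f" "kk i \<in> snd x"
    "y = (fst x - ee i, snd x - {kk i})" by blast
  then show ?thesis by blast
qed


lemma H_at_minus:
  assumes gT: "good T" and ib: "i \<in> Poly_Mapping.keys b" and kT: "kk i \<in> T"
  shows "Poly_Mapping.lookup (Hop u) (b - ee i, T - {kk i}) =
    of_nat (Poly_Mapping.lookup b i) * psi_sign T (kk i) * Poly_Mapping.lookup u (b, T) +
    (\<Sum>j\<in>{j. kk j \<notin> T}. of_nat (Poly_Mapping.lookup b j + 1) * psi_sign (T - {kk i}) (kk j)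
        * Poly_Mapping.lookup u (b + ee j - ee i, insert (kk j) T - {kk i}))"
proof -
  have g2: "good (T - {kk i})" using gT by (rule good_remove)
  have hs: "{j. kk j \<notin> T - {kk i}} = insert i {j. kk j \<notin> T}" by auto
  have fin: "finite {j. kk j \<notin> T}" using gT by (simp add: good_def)
  have ni: "i \<notin> {j. kk j \<notin> T}" using kT by simp
  have l1: "Poly_Mapping.lookup (b - ee i) i + 1 = Poly_Mapping.lookup b i"
    using ib by (simp add: lookup_minus lookup_single in_keys_iff)
  have l2: "Poly_Mapping.lookup (b - ee i) j = Poly_Mapping.lookup b j" if "j \<in> {j. kk j \<notin> T}" for j
    using that kT by (auto simp: lookup_minus lookup_single when_def)
  have p2: "b - ee i + ee j = b + ee j - ee i" if "j \<in> {j. kk j \<notin> T}" for j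
    using that kT ib by (intro pm_swap) auto
  have s2: "insert (kk j) (T - {kk i}) = insert (kk j) T - {kk i}" if "j \<in> {j. kk j \<notin> T}" for j
    using that kT by auto
  show ?thesis
    unfolding H_lookup[OF g2] hs
    apply (subst sum.insert[OF fin ni])
    apply (simp add: l1 sig_rem_self pm_diff_add[OF ib] insert_absorb[OF kT])
    apply (rule sum.cong[OF refl])
    apply (simp add: l2 p2 s2)
    done
qed

lemma Q_at_plus:
  assumes gu: "\<forall>x\<in>Poly_Mapping.keys u. good (snd x)" and kT: "kk j \<notin> T"
  shows "Poly_Mapping.lookup (Q u) (b + ee j, insert (kk j) T) =
    psi_sign T (kk j) * Poly_Mapping.lookup u (b, T) +
    (\<Sum>i\<in>{i\<in>Poly_Mapping.keys b. kk i \<in> T}. psi_sign (insert (kk j) T) (kk i)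
        * Poly_Mapping.lookup u (b + ee j - ee i, insert (kk j) T - {kk i}))"
proof -
  have ks: "{i\<in>Poly_Mapping.keys (b + ee j). kk i \<in> insert (kk j) T} = insert j {i\<in>Poly_Mapping.keys b. kk i \<in> T}"
    by (auto simp: keys_plus_e)
  have ni: "j \<notin> {i\<in>Poly_Mapping.keys b. kk i \<in> T}" using kT by simp
  have s: "insert (kk j) T - {kk j} = T" using kT by auto
  show ?thesis
    unfolding Q_lookup[OF gu] ks
    by (subst sum.insert[OF _ ni]) (simp_all add: sig_ins_self pm_add_diff s)
qed


definition deg :: "(nat \<Rightarrow>\<^sub>0 nat) \<Rightarrow> nat" where
  "deg b = sum (Poly_Mapping.lookup b) (Poly_Mapping.keys b)"

lemma deg_sup: "finite K \<Longrightarrow> Poly_Mapping.keys b \<subseteq> K \<Longrightarrow> deg b = sum (Poly_Mapping.lookup b) K"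
  unfolding deg_def by (rule sum.mono_neutral_left) (auto simp: in_keys_iff)

definition w :: "(nat \<Rightarrow>\<^sub>0 nat) \<Rightarrow> int set \<Rightarrow> complex" where
  "w b T = of_nat (deg b + card {i. kk i \<notin> T})"

lemma cross_sign:
  assumes gT: "good T" and ki: "kk i \<in> T" and kj: "kk j \<notin> T"
  shows "psi_sign T (kk i) * psi_sign (T - {kk i}) (kk j) = - (psi_sign T (kk j) * psi_sign (insert (kk j) T) (kk i))"
proof -
  have ne: "kk i \<noteq> kk j" using ki kj by auto
  have r: "psi_sign (T - {kk i}) (kk j) = (if kk i > kk j then - psi_sign T (kk j) else psi_sign T (kk j))"
    by (rule sig_rem[OF ki good_upper[OF gT] ne])
  have s: "psi_sign (insert (kk j) T) (kk i) = (if kk j > kk i then - psi_sign T (kk i) else psi_sign T (kk i))"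
    by (rule sig_ins[OF kj good_upper[OF gT]]) (use ne in auto)
  show ?thesis
  proof (cases "kk j < kk i")
    case True
    then have "\<not> kk i < kk j" by simp
    then show ?thesis using True by (simp add: r s)
  next
    case False
    then have "kk i < kk j" using ne by linarith
    then show ?thesis using False by (simp add: r s)
  qed
qed

lemma aux1: fixes s a x S :: complex shows "s * s = 1 \<Longrightarrow> s * (a * s * x + S) = a * x + s * S"
proof -
  assume h: "s * s = 1"
  have "s * (a * s * x + S) = a * (s * s) * x + s * S" by (simp add: algebra_simps)
  then show ?thesis using h by simp
qed

lemma aux2: fixes s c x S :: complex shows "s * s = 1 \<Longrightarrow> c * s * (s * x + S) = c * x + c * s * S"
proof -
  assume h: "s * s = 1"
  have "c * s * (s * x + S) = c * (s * s) * x + c * s * S" by (simp add: algebra_simps)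
  then show ?thesis using h by simp
qed

lemma QH_HQ:
  assumes gu: "\<forall>x\<in>Poly_Mapping.keys u. good (snd x)" and gT: "good T"
  shows "Poly_Mapping.lookup (Q (Hop u)) (b,T) + Poly_Mapping.lookup (Hop (Q u)) (b,T) = w b T * Poly_Mapping.lookup u (b,T)"
proof -
  define A where "A = {i\<in>Poly_Mapping.keys b. kk i \<in> T}"
  define H where "H = {j. kk j \<notin> T}"
  define U where "U = (\<lambda>i j. Poly_Mapping.lookup u (b + ee j - ee i, insert (kk j) T - {kk i}))"
  define c where "c = (\<lambda>j. (of_nat (Poly_Mapping.lookup b j + 1)::complex))"
  have finA: "finite A" by (simp add: A_def)
  have finH: "finite H" using gT by (simp add: H_def good_def)
  have disj: "A \<inter> H = {}" by (auto simp: A_def H_def)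
  have gH: "\<forall>x\<in>Poly_Mapping.keys (Hop u). good (snd x)"
  proof
    fix x assume "x \<in> Poly_Mapping.keys (Hop u)"
    then obtain x0 i where "x0 \<in> Poly_Mapping.keys u" "x = (fst x0 - ee i, snd x0 - {kk i})"
      using keys_Hop by blast
    then show "good (snd x)" using gu good_remove by auto
  qed
  have P1: "Poly_Mapping.lookup (Q (Hop u)) (b,T) = (\<Sum>i\<in>A. of_nat (Poly_Mapping.lookup b i) * Poly_Mapping.lookup u (b,T))
     + (\<Sum>i\<in>A. \<Sum>j\<in>H. psi_sign T (kk i) * (c j * psi_sign (T - {kk i}) (kk j) * U i j))"
  proof -
    have "Poly_Mapping.lookup (Q (Hop u)) (b,T) = (\<Sum>i\<in>A. psi_sign T (kk i) * Poly_Mapping.lookup (Hop u) (b - ee i, T - {kk i}))"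
      unfolding A_def by (rule Q_lookup[OF gH])
    also have "\<dots> = (\<Sum>i\<in>A. of_nat (Poly_Mapping.lookup b i) * Poly_Mapping.lookup u (b,T)
        + (\<Sum>j\<in>H. psi_sign T (kk i) * (c j * psi_sign (T - {kk i}) (kk j) * U i j)))"
    proof (rule sum.cong[OF refl])
      fix i assume "i \<in> A"
      then have ib: "i \<in> Poly_Mapping.keys b" and kT: "kk i \<in> T" by (auto simp: A_def)
      show "psi_sign T (kk i) * Poly_Mapping.lookup (Hop u) (b - ee i, T - {kk i}) =
         of_nat (Poly_Mapping.lookup b i) * Poly_Mapping.lookup u (b,T)
        + (\<Sum>j\<in>H. psi_sign T (kk i) * (c j * psi_sign (T - {kk i}) (kk j) * U i j))"
        unfolding H_at_minus[OF gT ib kT] aux1[OF sig_sq] sum_distrib_left H_def c_def U_def ..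
    qed
    also have "\<dots> = (\<Sum>i\<in>A. of_nat (Poly_Mapping.lookup b i) * Poly_Mapping.lookup u (b,T))
     + (\<Sum>i\<in>A. \<Sum>j\<in>H. psi_sign T (kk i) * (c j * psi_sign (T - {kk i}) (kk j) * U i j))"
      by (rule sum.distrib)
    finally show ?thesis .
  qed
  have P2: "Poly_Mapping.lookup (Hop (Q u)) (b,T) = (\<Sum>j\<in>H. c j * Poly_Mapping.lookup u (b,T))
     + (\<Sum>j\<in>H. \<Sum>i\<in>A. c j * psi_sign T (kk j) * (psi_sign (insert (kk j) T) (kk i) * U i j))"
  proof -
    have "Poly_Mapping.lookup (Hop (Q u)) (b,T) = (\<Sum>j\<in>H. c j * psi_sign T (kk j) * Poly_Mapping.lookup (Q u) (b + ee j, insert (kk j) T))"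
      unfolding H_lookup[OF gT] H_def c_def ..
    also have "\<dots> = (\<Sum>j\<in>H. c j * Poly_Mapping.lookup u (b,T)
        + (\<Sum>i\<in>A. c j * psi_sign T (kk j) * (psi_sign (insert (kk j) T) (kk i) * U i j)))"
    proof (rule sum.cong[OF refl])
      fix j assume "j \<in> H"
      then have kT: "kk j \<notin> T" by (auto simp: H_def)
      show "c j * psi_sign T (kk j) * Poly_Mapping.lookup (Q u) (b + ee j, insert (kk j) T) =
          c j * Poly_Mapping.lookup u (b,T)
        + (\<Sum>i\<in>A. c j * psi_sign T (kk j) * (psi_sign (insert (kk j) T) (kk i) * U i j))"
        unfolding Q_at_plus[OF gu kT] aux2[OF sig_sq] sum_distrib_left A_def U_def ..
    qed
    also have "\<dots> = (\<Sum>j\<in>H. c j * Poly_Mapping.lookup u (b,T))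
     + (\<Sum>j\<in>H. \<Sum>i\<in>A. c j * psi_sign T (kk j) * (psi_sign (insert (kk j) T) (kk i) * U i j))"
      by (rule sum.distrib)
    finally show ?thesis .
  qed
  have CR: "(\<Sum>i\<in>A. \<Sum>j\<in>H. psi_sign T (kk i) * (c j * psi_sign (T - {kk i}) (kk j) * U i j))
     + (\<Sum>j\<in>H. \<Sum>i\<in>A. c j * psi_sign T (kk j) * (psi_sign (insert (kk j) T) (kk i) * U i j)) = 0"
  proof -
    have "(\<Sum>j\<in>H. \<Sum>i\<in>A. c j * psi_sign T (kk j) * (psi_sign (insert (kk j) T) (kk i) * U i j))
       = (\<Sum>i\<in>A. \<Sum>j\<in>H. c j * psi_sign T (kk j) * (psi_sign (insert (kk j) T) (kk i) * U i j))"
      by (rule sum.swap)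
    moreover have "(\<Sum>i\<in>A. \<Sum>j\<in>H. psi_sign T (kk i) * (c j * psi_sign (T - {kk i}) (kk j) * U i j))
       = (\<Sum>i\<in>A. \<Sum>j\<in>H. - (c j * psi_sign T (kk j) * (psi_sign (insert (kk j) T) (kk i) * U i j)))"
    proof (intro sum.cong refl)
      fix i j assume "i \<in> A" "j \<in> H"
      then have ki: "kk i \<in> T" and kj: "kk j \<notin> T" by (auto simp: A_def H_def)
      have e: "psi_sign T (kk i) * psi_sign (T - {kk i}) (kk j) = - (psi_sign T (kk j) * psi_sign (insert (kk j) T) (kk i))"
        by (rule cross_sign[OF gT ki kj])
      have "psi_sign T (kk i) * (c j * psi_sign (T - {kk i}) (kk j) * U i j)
          = c j * U i j * (psi_sign T (kk i) * psi_sign (T - {kk i}) (kk j))" by (simp add: algebra_simps)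
      also have "\<dots> = - (c j * psi_sign T (kk j) * (psi_sign (insert (kk j) T) (kk i) * U i j))"
        unfolding e by (simp add: algebra_simps)
      finally show "psi_sign T (kk i) * (c j * psi_sign (T - {kk i}) (kk j) * U i j)
          = - (c j * psi_sign T (kk j) * (psi_sign (insert (kk j) T) (kk i) * U i j))" .
    qed
    ultimately show ?thesis by (simp add: sum_negf)
  qed
  have deg: "deg b = sum (Poly_Mapping.lookup b) A + sum (Poly_Mapping.lookup b) H"
  proof -
    have "deg b = sum (Poly_Mapping.lookup b) (A \<union> H)"
      by (rule deg_sup) (use finA finH in \<open>auto simp: A_def H_def\<close>)
    also have "\<dots> = sum (Poly_Mapping.lookup b) A + sum (Poly_Mapping.lookup b) H"
      by (rule sum.union_disjoint[OF finA finH disj])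
    finally show ?thesis .
  qed
  have W: "w b T = (\<Sum>i\<in>A. of_nat (Poly_Mapping.lookup b i)) + (\<Sum>j\<in>H. c j)"
  proof -
    have "(\<Sum>j\<in>H. Poly_Mapping.lookup b j + 1) = sum (Poly_Mapping.lookup b) H + card H"
      by (simp add: sum.distrib)
    moreover have "(\<Sum>j\<in>H. c j) = of_nat (\<Sum>j\<in>H. Poly_Mapping.lookup b j + 1)"
      unfolding c_def by (rule of_nat_sum[symmetric])
    moreover have "(\<Sum>i\<in>A. (of_nat (Poly_Mapping.lookup b i)::complex)) = of_nat (sum (Poly_Mapping.lookup b) A)"
      by (rule of_nat_sum[symmetric])
    ultimately show ?thesis unfolding w_def deg H_def[symmetric]
      by simp
  qed
  have e1: "(\<Sum>i\<in>A. of_nat (Poly_Mapping.lookup b i) * Poly_Mapping.lookup u (b,T)) = (\<Sum>i\<in>A. of_nat (Poly_Mapping.lookup b i)) * Poly_Mapping.lookup u (b,T)"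
    by (simp add: sum_distrib_right)
  have e2: "(\<Sum>j\<in>H. c j * Poly_Mapping.lookup u (b,T)) = (\<Sum>j\<in>H. c j) * Poly_Mapping.lookup u (b,T)"
    by (simp add: sum_distrib_right)
  have re: "\<And>a X b' Y :: complex. a + X + (b' + Y) = a + b' + (X + Y)" by (simp add: algebra_simps)
  show ?thesis
    unfolding P1 P2 W e1 e2 re CR distrib_right by simp
qed


definition ch :: "int set \<Rightarrow> int set \<Rightarrow> int" where
  "ch S V = int (card (S - V)) - int (card (V - S))"

lemma ch_insert_S:
  assumes "finite (S - V)" "finite (V - S)" "k \<notin> S"
  shows "ch (insert k S) V = ch S V + 1"
proof (cases "k \<in> V")
  case True
  have e1: "insert k S - V = S - V" using True by auto
  have e2: "V - insert k S = (V - S) - {k}" by auto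
  have "card (V - S) = Suc (card ((V - S) - {k}))"
    using assms True by (intro card.remove) auto
  then show ?thesis unfolding ch_def e1 e2 by simp
next
  case False
  have e1: "insert k S - V = insert k (S - V)" using False by auto
  have e2: "V - insert k S = V - S" using False by auto
  show ?thesis unfolding ch_def e1 e2 using assms by simp
qed

lemma ch_insert_V:
  assumes "finite (S - V)" "finite (V - S)" "v \<notin> V"
  shows "ch S (insert v V) = ch S V - 1"
proof (cases "v \<in> S")
  case True
  have e1: "S - insert v V = (S - V) - {v}" by auto
  have e2: "insert v V - S = V - S" using True by auto
  have "card (S - V) = Suc (card ((S - V) - {v}))"
    using assms True by (intro card.remove) auto
  then show ?thesis unfolding ch_def e1 e2 by simp
next
  case False
  have e1: "S - insert v V = S - V" using False by auto
  have e2: "insert v V - S = insert v (V - S)" using False by auto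
  show ?thesis unfolding ch_def e1 e2 using assms by simp
qed

lemma odd_le_minus2: "odd (n::int) \<Longrightarrow> odd m \<Longrightarrow> n < m \<Longrightarrow> n \<le> m - 2"
  by (elim oddE) presburger

lemma vac_step: "odd m \<Longrightarrow> vac_set m = insert m (vac_set (m - 2))"
  unfolding vac_set_def using odd_le_minus2 by force

lemma vac_step_notin: "m \<notin> vac_set (m - 2)"
  unfolding vac_set_def by simp

lemma fock_iff: "fock_state m S \<longleftrightarrow> (\<forall>s\<in>S. odd s) \<and> finite (S - vac_set m) \<and> finite (vac_set m - S) \<and> ch S (vac_set m) = 0"
  unfolding fock_state_def ch_def by auto

lemma fock_insert:
  assumes m: "odd m" and f: "fock_state (m - 2) S" and k: "odd k" "k \<notin> S"
  shows "fock_state m (insert k S)"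
proof -
  define V where "V = vac_set (m - 2)"
  have vm: "vac_set m = insert m V" unfolding V_def using m by (rule vac_step)
  have mV: "m \<notin> V" unfolding V_def by (rule vac_step_notin)
  have f1: "finite (S - V)" "finite (V - S)" "ch S V = 0" "\<forall>s\<in>S. odd s" using f unfolding fock_iff V_def by auto
  have f2: "finite (insert k S - V)" "finite (V - insert k S)"
    using f1 by (auto intro: finite_subset[of _ "insert k (S - V)"] finite_subset[of _ "V - S"])
  have "ch (insert k S) (insert m V) = 0"
    using ch_insert_V[OF f2 mV] ch_insert_S[OF f1(1,2) k(2)] f1(3) by simp
  moreover have "finite (insert k S - insert m V)" "finite (insert m V - insert k S)"
    using f1 by (auto intro: finite_subset[of _ "insert k (S - V)"] finite_subset[of _ "insert m (V - S)"])
  ultimately show ?thesis unfolding fock_iff vm using f1(4) k(1) by auto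
qed

lemma fock_remove:
  assumes m: "odd m" and f: "fock_state m S" and k: "k \<in> S"
  shows "fock_state (m - 2) (S - {k})"
proof -
  define V where "V = vac_set (m - 2)"
  define S' where "S' = S - {k}"
  have SS: "S = insert k S'" "k \<notin> S'" unfolding S'_def using k by auto
  have vm: "vac_set m = insert m V" unfolding V_def using m by (rule vac_step)
  have mV: "m \<notin> V" unfolding V_def by (rule vac_step_notin)
  have f1: "finite (S - insert m V)" "finite (insert m V - S)" "ch S (insert m V) = 0" "\<forall>s\<in>S. odd s"
    using f unfolding fock_iff vm by auto
  have f2: "finite (S' - V)" "finite (V - S')"
    using f1 unfolding S'_def by (auto intro: finite_subset[of _ "insert m (S - insert m V)"] finite_subset[of _ "insert k (insert m V - S)"])
  have f3: "finite (S - V)" "finite (V - S)"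
    using f1 by (auto intro: finite_subset[of _ "insert m (S - insert m V)"] finite_subset[of _ "insert m V - S"])
  have "ch S V - 1 = 0" using ch_insert_V[OF f3 mV] f1(3) by simp
  moreover have "ch S V = ch S' V + 1" unfolding SS(1) by (rule ch_insert_S[OF f2 SS(2)])
  ultimately have "ch S' V = 0" by simp
  then show ?thesis unfolding fock_iff V_def[symmetric] S'_def[symmetric] using f2 f1(4) SS by auto
qed

lemma good_of_fock:
  assumes f: "fock_state m T"
  shows "good T"
proof -
  have f1: "finite (T - vac_set m)" "finite (vac_set m - T)" using f unfolding fock_state_def by auto
  have a: "{s\<in>T. s \<ge> 0} \<subseteq> (T - vac_set m) \<union> {0..m}" by (auto simp: vac_set_def)
  have b: "{i. kk i \<notin> T} \<subseteq> kk -` (vac_set m - T) \<union> {..<nat (- m)}"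
  proof
    fix i assume "i \<in> {i. kk i \<notin> T}"
    then show "i \<in> kk -` (vac_set m - T) \<union> {..<nat (- m)}"
      using kk_odd[of i] by (auto simp: vac_set_def kk_def)
  qed
  have "finite (kk -` (vac_set m - T))" by (rule finite_vimageI[OF f1(2) inj_kk])
  then show ?thesis unfolding good_def using a b f1 by (auto intro: finite_subset)
qed

lemma neg_odd_kk: "odd (n::int) \<Longrightarrow> n < 0 \<Longrightarrow> \<exists>i. n = kk i"
proof -
  assume "odd n" "n < 0"
  then obtain k where k: "n = 2 * k + 1" "k < 0" by (auto elim!: oddE)
  then show ?thesis by (intro exI[of _ "nat (- k - 1)"]) (simp add: kk_def)
qed

lemma holes_nonempty:
  assumes f: "fock_state m T" and m: "m < -1"
  shows "card {i. kk i \<notin> T} \<noteq> 0"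
proof
  assume c: "card {i. kk i \<notin> T} = 0"
  have fin: "finite {i. kk i \<notin> T}" using good_of_fock[OF f] by (simp add: good_def)
  have all: "kk i \<in> T" for i using c fin by auto
  have "vac_set m - T = {}"
  proof -
    have "n \<in> T" if "n \<in> vac_set m" for n
    proof -
      from that m have "odd n" "n < 0" by (auto simp: vac_set_def)
      then obtain i where "n = kk i" using neg_odd_kk by blast
      then show ?thesis using all by simp
    qed
    then show ?thesis by auto
  qed
  then have "card (T - vac_set m) = 0" using f unfolding fock_state_def by auto
  moreover have "finite (T - vac_set m)" using f unfolding fock_state_def by auto
  ultimately have "T - vac_set m = {}" by simp
  moreover have "kk 0 \<in> T - vac_set m" using all[of 0] m by (auto simp: vac_set_def kk_def)
  ultimately show False by blast
qed


definition Lam :: "elt \<Rightarrow> elt" where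
  "Lam f = Poly_Mapping.mapp (\<lambda>x v. v / w (fst x) (snd x)) f"

lemma lookup_Lam: "Poly_Mapping.lookup (Lam f) x = Poly_Mapping.lookup f x / w (fst x) (snd x)"
  unfolding Lam_def lookup_mapp by (simp add: when_def in_keys_iff)

lemma keys_Lam: "Poly_Mapping.keys (Lam f) \<subseteq> Poly_Mapping.keys f"
  unfolding Lam_def by (rule keys_mapp_subset)

lemma w_shift:
  assumes gT: "good T" and ib: "i \<in> Poly_Mapping.keys b" and kT: "kk i \<in> T"
  shows "w (b - ee i) (T - {kk i}) = w b T"
proof -
  have sub: "Poly_Mapping.keys (b - ee i) \<subseteq> Poly_Mapping.keys b"
    by (auto simp: in_keys_iff lookup_minus)
  have fk: "finite (Poly_Mapping.keys b)" by simp
  have "deg (b - ee i) = sum (Poly_Mapping.lookup (b - ee i)) (Poly_Mapping.keys b)"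
    by (rule deg_sup[OF fk sub])
  also have "\<dots> = Poly_Mapping.lookup (b - ee i) i + sum (Poly_Mapping.lookup (b - ee i)) (Poly_Mapping.keys b - {i})"
    by (rule sum.remove[OF fk ib])
  also have "sum (Poly_Mapping.lookup (b - ee i)) (Poly_Mapping.keys b - {i}) = sum (Poly_Mapping.lookup b) (Poly_Mapping.keys b - {i})"
    by (rule sum.cong) (auto simp: lookup_minus lookup_single when_def)
  finally have d1: "deg (b - ee i) = Poly_Mapping.lookup (b - ee i) i + sum (Poly_Mapping.lookup b) (Poly_Mapping.keys b - {i})" .
  have d2: "deg b = Poly_Mapping.lookup b i + sum (Poly_Mapping.lookup b) (Poly_Mapping.keys b - {i})"
    unfolding deg_def by (rule sum.remove[OF fk ib])
  have l: "Poly_Mapping.lookup (b - ee i) i + 1 = Poly_Mapping.lookup b i"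
    using ib by (simp add: lookup_minus lookup_single in_keys_iff)
  have hs: "{j. kk j \<notin> T - {kk i}} = insert i {j. kk j \<notin> T}" by auto
  have fin: "finite {j. kk j \<notin> T}" using gT by (simp add: good_def)
  have c: "card {j. kk j \<notin> T - {kk i}} = Suc (card {j. kk j \<notin> T})"
    unfolding hs using fin kT by simp
  have e: "deg (b - ee i) + Suc (card {j. kk j \<notin> T}) = deg b + card {j. kk j \<notin> T}"
    using d1 d2 l by simp
  show ?thesis unfolding w_def c e ..
qed

lemma QLam_zero:
  assumes gf: "\<forall>x\<in>Poly_Mapping.keys f. good (snd x)" and Qf: "Q f = 0"
  shows "Q (Lam f) = 0"
proof (rule poly_mapping_eqI)
  fix y :: "(nat \<Rightarrow>\<^sub>0 nat) \<times> int set"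
  obtain b T where y: "y = (b,T)" by (cases y)
  have gL: "\<forall>x\<in>Poly_Mapping.keys (Lam f). good (snd x)" using gf keys_Lam by blast
  have "Poly_Mapping.lookup (Q (Lam f)) (b,T) = (\<Sum>i\<in>{i\<in>Poly_Mapping.keys b. kk i \<in> T}.
            psi_sign T (kk i) * (Poly_Mapping.lookup f (b - ee i, T - {kk i}) / w (b - ee i) (T - {kk i})))"
    unfolding Q_lookup[OF gL] lookup_Lam by simp
  also have "\<dots> = 0"
  proof (cases "good T")
    case True
    have "(\<Sum>i\<in>{i\<in>Poly_Mapping.keys b. kk i \<in> T}.
            psi_sign T (kk i) * (Poly_Mapping.lookup f (b - ee i, T - {kk i}) / w (b - ee i) (T - {kk i})))
        = (\<Sum>i\<in>{i\<in>Poly_Mapping.keys b. kk i \<in> T}.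
            psi_sign T (kk i) * Poly_Mapping.lookup f (b - ee i, T - {kk i})) / w b T"
      unfolding sum_divide_distrib by (rule sum.cong) (auto simp: w_shift[OF True])
    also have "\<dots> = Poly_Mapping.lookup (Q f) (b,T) / w b T" unfolding Q_lookup[OF gf] ..
    finally show ?thesis using Qf by simp
  next
    case False
    have "Poly_Mapping.lookup f (b - ee i, T - {kk i}) = 0" if "kk i \<in> T" for i
    proof -
      have "\<not> good (T - {kk i})"
      proof
        assume "good (T - {kk i})"
        then have "good (insert (kk i) (T - {kk i}))" by (rule good_insert)
        then show False using False that by (simp add: insert_absorb)
      qed
      then have "(b - ee i, T - {kk i}) \<notin> Poly_Mapping.keys f" using gf by auto
      then show ?thesis by (simp add: in_keys_iff)
    qed
    then show ?thesis by (intro sum.neutral) auto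
  qed
  finally show "Poly_Mapping.lookup (Q (Lam f)) y = Poly_Mapping.lookup 0 y" using y by simp
qed

lemma good_keys_Q:
  assumes "\<forall>x\<in>Poly_Mapping.keys g. good (snd x)"
  shows "\<forall>x\<in>Poly_Mapping.keys (Q g). good (snd x)"
proof
  fix x assume "x \<in> Poly_Mapping.keys (Q g)"
  then obtain x0 i where "x0 \<in> Poly_Mapping.keys g" "x = (fst x0 + ee i, insert (kk i) (snd x0))"
    using keys_Q by blast
  then show "good (snd x)" using assms good_insert by auto
qed

lemma QQ_zero:
  assumes gg: "\<forall>x\<in>Poly_Mapping.keys g. good (snd x)"
  shows "Q (Q g) = 0"
proof (rule poly_mapping_eqI)
  fix y :: "(nat \<Rightarrow>\<^sub>0 nat) \<times> int set"
  obtain b T where y: "y = (b,T)" by (cases y)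
  have gQ: "\<forall>x\<in>Poly_Mapping.keys (Q g). good (snd x)" using gg by (rule good_keys_Q)
  define A where "A = {i\<in>Poly_Mapping.keys b. kk i \<in> T}"
  have L: "Poly_Mapping.lookup (Q (Q g)) (b,T) = (\<Sum>i\<in>A. psi_sign T (kk i) * Poly_Mapping.lookup (Q g) (b - ee i, T - {kk i}))"
    unfolding A_def by (rule Q_lookup[OF gQ])
  have "Poly_Mapping.lookup (Q (Q g)) (b,T) = 0"
  proof (cases "good T")
    case False
    have "Poly_Mapping.lookup (Q g) (b - ee i, T - {kk i}) = 0" if "i \<in> A" for i
    proof -
      have "\<not> good (T - {kk i})"
      proof
        assume "good (T - {kk i})"
        then have "good (insert (kk i) (T - {kk i}))" by (rule good_insert)
        then show False using False that by (simp add: insert_absorb A_def)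
      qed
      then have "(b - ee i, T - {kk i}) \<notin> Poly_Mapping.keys (Q g)" using gQ by auto
      then show ?thesis by (simp add: in_keys_iff)
    qed
    then show ?thesis unfolding L by (intro sum.neutral) auto
  next
    case True
    define F where "F = (\<lambda>i j. psi_sign T (kk i) * (psi_sign (T - {kk i}) (kk j) * Poly_Mapping.lookup g (b - ee i - ee j, T - {kk i} - {kk j})))"
    have finA: "finite A" by (simp add: A_def)
    have inner: "psi_sign T (kk i) * Poly_Mapping.lookup (Q g) (b - ee i, T - {kk i}) = (\<Sum>j\<in>{j\<in>A. i \<noteq> j}. F i j)"
      if "i \<in> A" for i
    proof -
      have ib: "i \<in> Poly_Mapping.keys b" and kT: "kk i \<in> T" using that by (auto simp: A_def)
      have ix: "{j\<in>Poly_Mapping.keys (b - ee i). kk j \<in> T - {kk i}} = {j\<in>A. i \<noteq> j}"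
        by (auto simp: A_def keys_mine)
      show ?thesis unfolding Q_lookup[OF gg] ix F_def sum_distrib_left ..
    qed
    have anti: "F j i = - F i j" if "i \<in> A" "j \<in> A" "i \<noteq> j" for i j
    proof -
      have ki: "kk i \<in> T" and kj: "kk j \<in> T" using that by (auto simp: A_def)
      have ne: "kk i \<noteq> kk j" using that by simp
      have r1: "psi_sign (T - {kk i}) (kk j) = (if kk i > kk j then - psi_sign T (kk j) else psi_sign T (kk j))"
        by (rule sig_rem[OF ki good_upper[OF True] ne])
      have r2: "psi_sign (T - {kk j}) (kk i) = (if kk j > kk i then - psi_sign T (kk i) else psi_sign T (kk i))"
        by (rule sig_rem[OF kj good_upper[OF True]]) (use ne in auto)
      have p: "b - ee j - ee i = b - ee i - ee j" by (rule pm_comm2)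
      have s: "T - {kk j} - {kk i} = T - {kk i} - {kk j}" by auto
      show ?thesis
      proof (cases "kk j < kk i")
        case True
        then have "\<not> kk i < kk j" by simp
        then show ?thesis using True unfolding F_def p s by (simp add: r1 r2 algebra_simps)
      next
        case False
        then have "kk i < kk j" using ne by linarith
        then show ?thesis using False unfolding F_def p s by (simp add: r1 r2 algebra_simps)
      qed
    qed
    define S where "S = (\<Sum>i\<in>A. \<Sum>j\<in>{j\<in>A. i \<noteq> j}. F i j)"
    have "Poly_Mapping.lookup (Q (Q g)) (b,T) = S" unfolding L S_def by (rule sum.cong) (auto simp: inner)
    moreover have "S = - S"
    proof -
      have "S = (\<Sum>j\<in>A. \<Sum>i\<in>{i\<in>A. i \<noteq> j}. F i j)" unfolding S_def by (rule sum.swap_restrict[OF finA finA])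
      also have "\<dots> = (\<Sum>j\<in>A. \<Sum>i\<in>{i\<in>A. j \<noteq> i}. - F j i)"
      proof (rule sum.cong[OF refl])
        fix j assume jA: "j \<in> A"
        show "(\<Sum>i\<in>{i\<in>A. i \<noteq> j}. F i j) = (\<Sum>i\<in>{i\<in>A. j \<noteq> i}. - F j i)"
        proof (rule sum.cong)
          fix i assume "i \<in> {i\<in>A. j \<noteq> i}"
          then have "i \<in> A" "j \<noteq> i" by auto
          from anti[OF jA this] show "F i j = - F j i" by simp
        qed auto
      qed
      also have "\<dots> = - S" unfolding S_def by (simp add: sum_negf)
      finally show ?thesis .
    qed
    ultimately show ?thesis by simp
  qed
  then show "Poly_Mapping.lookup (Q (Q g)) y = Poly_Mapping.lookup 0 y" using y by simp
qed


lemma Hop_zero: "Hop 0 = 0" by (simp add: Hop_def)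

lemma DH_good: "f \<in> DH m \<Longrightarrow> \<forall>x\<in>Poly_Mapping.keys f. good (snd x)"
  unfolding DH_def using good_of_fock by blast

lemma exact_main:
  assumes m: "odd m" "m < -1"
  shows "{f \<in> DH m. Q f = 0} = Q ` DH (m - 2)"
proof (rule set_eqI, rule iffI)
  fix f assume "f \<in> {f \<in> DH m. Q f = 0}"
  then have fD: "f \<in> DH m" and Qf: "Q f = 0" by auto
  have gf: "\<forall>x\<in>Poly_Mapping.keys f. good (snd x)" using fD by (rule DH_good)
  define g where "g = Hop (Lam f)"
  have gD: "g \<in> DH (m - 2)"
    unfolding DH_def
  proof
    show "\<forall>x\<in>Poly_Mapping.keys g. fock_state (m - 2) (snd x)"
    proof
      fix y assume "y \<in> Poly_Mapping.keys g"
      then obtain x i where x: "x \<in> Poly_Mapping.keys (Lam f)" and ki: "kk i \<in> snd x"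
        and y: "y = (fst x - ee i, snd x - {kk i})"
        unfolding g_def using keys_Hop by blast
      have "fock_state m (snd x)" using x keys_Lam fD unfolding DH_def by blast
      then show "fock_state (m - 2) (snd y)" unfolding y using fock_remove[OF m(1) _ ki] by simp
    qed
  qed
  have gg: "\<forall>x\<in>Poly_Mapping.keys g. good (snd x)" using gD by (rule DH_good)
  have "Q g = f"
  proof (rule poly_mapping_eqI)
    fix y :: "(nat \<Rightarrow>\<^sub>0 nat) \<times> int set"
    obtain b T where y: "y = (b,T)" by (cases y)
    show "Poly_Mapping.lookup (Q g) y = Poly_Mapping.lookup f y"
    proof (cases "good T")
      case True
      have gL: "\<forall>x\<in>Poly_Mapping.keys (Lam f). good (snd x)" using gf keys_Lam by blast
      have "Poly_Mapping.lookup (Q g) (b,T) = w b T * (Poly_Mapping.lookup f (b,T) / w b T)"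
        using QH_HQ[OF gL True, of b] unfolding g_def QLam_zero[OF gf Qf] Hop_zero lookup_Lam by simp
      also have "\<dots> = Poly_Mapping.lookup f (b,T)"
      proof (cases "(b,T) \<in> Poly_Mapping.keys f")
        case True
        then have "fock_state m T" using fD unfolding DH_def by auto
        then have "card {i. kk i \<notin> T} \<noteq> 0" using m(2) by (rule holes_nonempty)
        then have "deg b + card {i. kk i \<notin> T} \<noteq> 0" by simp
        then have "w b T \<noteq> 0" unfolding w_def of_nat_eq_0_iff .
        then show ?thesis by simp
      next
        case False
        then show ?thesis by (simp add: in_keys_iff)
      qed
      finally show ?thesis using y by simp
    next
      case False
      have "Poly_Mapping.lookup g (b - ee i, T - {kk i}) = 0" if "kk i \<in> T" for i
      proof -
        have "\<not> good (T - {kk i})"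
        proof
          assume "good (T - {kk i})"
          then have "good (insert (kk i) (T - {kk i}))" by (rule good_insert)
          then show False using False that by (simp add: insert_absorb)
        qed
        then have "(b - ee i, T - {kk i}) \<notin> Poly_Mapping.keys g" using gg by auto
        then show ?thesis by (simp add: in_keys_iff)
      qed
      then have "Poly_Mapping.lookup (Q g) (b,T) = 0"
        unfolding Q_lookup[OF gg] by (intro sum.neutral) auto
      moreover have "Poly_Mapping.lookup f (b,T) = 0"
      proof -
        have "(b,T) \<notin> Poly_Mapping.keys f" using gf False by force
        then show ?thesis by (simp add: in_keys_iff)
      qed
      ultimately show ?thesis using y by simp
    qed
  qed
  then show "f \<in> Q ` DH (m - 2)" using gD by blast
next
  fix f assume "f \<in> Q ` DH (m - 2)"
  then obtain g where gD: "g \<in> DH (m - 2)" and f: "f = Q g" by blast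
  have gg: "\<forall>x\<in>Poly_Mapping.keys g. good (snd x)" using gD by (rule DH_good)
  have "f \<in> DH m"
    unfolding DH_def
  proof
    show "\<forall>x\<in>Poly_Mapping.keys f. fock_state m (snd x)"
    proof
      fix y assume "y \<in> Poly_Mapping.keys f"
      then obtain x i where x: "x \<in> Poly_Mapping.keys g" and ki: "kk i \<notin> snd x"
        and y: "y = (fst x + ee i, insert (kk i) (snd x))"
        unfolding f using keys_Q by blast
      have "fock_state (m - 2) (snd x)" using x gD unfolding DH_def by blast
      then show "fock_state m (snd y)" unfolding y using fock_insert[OF m(1) _ kk_odd ki] by simp
    qed
  qed
  moreover have "Q f = 0" unfolding f by (rule QQ_zero[OF gg])
  ultimately show "f \<in> {f \<in> DH m. Q f = 0}" by simp
qed

theorem lemma1: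
  fixes n :: nat
  assumes "n \<ge> 1"
  shows "{f \<in> DH (- 2 * int n - 1). Q f = 0} = Q ` DH (- 2 * int n - 3)"
proof -
  have e: "- 2 * int n - 3 = (- 2 * int n - 1) - 2" by simp
  have o: "odd (- 2 * int n - 1)" by presburger
  have l: "- 2 * int n - 1 < -1" using assms by simp
  show ?thesis unfolding e by (rule exact_main[OF o l])
qed

end
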